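(* Let $n \ge 2$, let $U \subset \mathbb{R}^n$ be an open set, and suppose that $f \in C^\infty(U,\mathbb{R}^n)$ and $\Psi \in C^1\bigl([0,\infty),[0,\infty)\bigr)$. Then for every $\eta \in C_c^\infty\bigl(U,[0,\infty)\bigr)$ we have $$\biggl| \int_U \eta \Bigl[ n\Psi\bigl(|f|^2\bigr) + 2|f|^2 \Psi'\bigl(|f|^2\bigr)\Bigr] J_f \biggr| \le \int_U |\nabla \eta|\, |f|\, \Psi\bigl(|f|^2\bigr)\, \|\operatorname{cof} Df\| .$$
   Context: $J_f = \det Df$ is the Jacobian determinant of $f$, $\operatorname{cof} Df$ is the cofactor matrix of the differential $Df$, and $\|\cdot\|$ denotes the operator norm of a matrix. Integrals are with respect to Lebesgue measure on $U$. *)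

theory Defs
  imports "HOL-Analysis.Analysis"
begin

fun Ck_on :: "nat \<Rightarrow> ('a::euclidean_space \<Rightarrow> 'b::real_normed_vector) \<Rightarrow> 'a set \<Rightarrow> bool" where
  "Ck_on 0 g U = continuous_on U g"
| "Ck_on (Suc k) g U = (g differentiable_on U \<and>
      (\<forall>v\<in>Basis. Ck_on k (\<lambda>x. frechet_derivative g (at x) v) U))"

definition smooth_on :: "('a::euclidean_space \<Rightarrow> 'b::real_normed_vector) \<Rightarrow> 'a set \<Rightarrow> bool" where
  "smooth_on g U = (\<forall>k. Ck_on k g U)"

definition Dmat :: "(real^'n \<Rightarrow> real^'m) \<Rightarrow> real^'n \<Rightarrow> real^'n^'m" where
  "Dmat f x = matrix (frechet_derivative f (at x))"

definition jac :: "(real^'n \<Rightarrow> real^'n) \<Rightarrow> real^'n \<Rightarrow> real" where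
  "jac f x = det (Dmat f x)"

text \<open>Cofactor matrix: entry (i,j) is the (i,j) cofactor (-1)^(i+j) M_ij, written as the
  determinant of A with row i replaced by the j-th unit row vector.\<close>
definition cof :: "real^'n^'n \<Rightarrow> real^'n^'n" where
  "cof A = (\<chi> i j. det (\<chi> k l. if k = i then (if l = j then 1 else 0) else A $ k $ l))"

definition opnorm :: "real^'n^'m \<Rightarrow> real" where
  "opnorm A = onorm (\<lambda>v. A *v v)"

definition grad :: "(real^'n \<Rightarrow> real) \<Rightarrow> real^'n \<Rightarrow> real^'n" where
  "grad g x = (\<chi> i. frechet_derivative g (at x) (axis i 1))"

end

theory Submission
  imports Defs
begin


definition dd :: "('a::real_normed_vector \<Rightarrow> real) \<Rightarrow> 'a \<Rightarrow> ('a \<Rightarrow> real) \<Rightarrow> 'a set \<Rightarrow> bool" where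
  "dd g v g' S \<longleftrightarrow> (\<forall>y\<in>S. ((\<lambda>t. g (y + t *\<^sub>R v)) has_real_derivative g' y) (at 0))"

lemma dd_const: "dd (\<lambda>x. c) v (\<lambda>x. 0) S"
  by (simp add: dd_def)

lemma dd_add: "dd g v g' S \<Longrightarrow> dd h v h' S \<Longrightarrow> dd (\<lambda>x. g x + h x) v (\<lambda>x. g' x + h' x) S"
  unfolding dd_def by (auto intro!: derivative_eq_intros)

lemma dd_mult: "dd g v g' S \<Longrightarrow> dd h v h' S \<Longrightarrow> dd (\<lambda>x. g x * h x) v (\<lambda>x. g' x * h x + g x * h' x) S"
  unfolding dd_def by (auto intro!: derivative_eq_intros)

lemma dd_sum: "(\<And>i. i \<in> I \<Longrightarrow> dd (g i) v (g' i) S) \<Longrightarrow> dd (\<lambda>x. \<Sum>i\<in>I. g i x) v (\<lambda>x. \<Sum>i\<in>I. g' i x) S"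
  unfolding dd_def by (auto intro!: DERIV_sum)

lemma dd_prod: assumes "\<And>i. i \<in> I \<Longrightarrow> dd (g i) v (g' i) S" shows
   "dd (\<lambda>x. \<Prod>i\<in>I. g i x) v (\<lambda>x. \<Sum>i\<in>I. g' i x * (\<Prod>j\<in>I-{i}. g j x)) S"
  unfolding dd_def
proof
  fix y assume "y \<in> S"
  then have "\<And>i. i \<in> I \<Longrightarrow> ((\<lambda>t. g i (y + t *\<^sub>R v)) has_real_derivative g' i y) (at 0)" using assms by (auto simp: dd_def)
  from has_field_derivative_prod[of I "\<lambda>i t. g i (y + t *\<^sub>R v)", OF this]
  show "((\<lambda>t. \<Prod>i\<in>I. g i (y + t *\<^sub>R v)) has_real_derivative (\<Sum>i\<in>I. g' i y * (\<Prod>j\<in>I - {i}. g j y))) (at 0)"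
    by simp
qed

lemma dd_comp:
  assumes Psi: "\<And>t. t \<ge> 0 \<Longrightarrow> (Psi has_real_derivative Psi' t) (at t within {0..})"
    and nn: "\<And>x. g x \<ge> 0" and g: "dd g v g' S"
  shows "dd (\<lambda>x. Psi (g x)) v (\<lambda>x. Psi' (g x) * g' x) S"
  unfolding dd_def
proof
  fix y assume y: "y \<in> S"
  let ?h = "\<lambda>t. g (y + t *\<^sub>R v)"
  have h: "(?h has_real_derivative g' y) (at 0 within UNIV)" using g y by (auto simp: dd_def)
  have "(Psi has_real_derivative Psi' (?h 0)) (at (?h 0) within ?h ` UNIV)"
    by (rule DERIV_subset[OF Psi]) (use nn in auto)
  from DERIV_image_chain[OF this h]
  show "((\<lambda>t. Psi (g (y + t *\<^sub>R v))) has_real_derivative Psi' (g y) * g' y) (at 0)"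
    by (simp add: o_def)
qed

lemma dd_at:
  assumes "dd g v g' S" "y + s *\<^sub>R v \<in> S"
  shows "((\<lambda>t. g (y + t *\<^sub>R v)) has_real_derivative g' (y + s *\<^sub>R v)) (at s)"
proof -
  have "((\<lambda>t. g ((y + s *\<^sub>R v) + t *\<^sub>R v)) has_real_derivative g' (y + s *\<^sub>R v)) (at 0)"
    using assms by (auto simp: dd_def)
  then have "((\<lambda>t. (\<lambda>t. g (y + t *\<^sub>R v)) (t + s)) has_real_derivative g' (y + s *\<^sub>R v)) (at 0)"
    by (simp add: algebra_simps)
  then show ?thesis using DERIV_shift[of "\<lambda>t. g (y + t *\<^sub>R v)" _ 0 s] by simp
qed



lemma mixed_mvt:
  fixes x a b :: "'a::real_normed_vector"
  assumes U: "\<And>\<sigma> \<tau>. 0 \<le> \<sigma> \<Longrightarrow> \<sigma> \<le> s \<Longrightarrow> 0 \<le> \<tau> \<Longrightarrow> \<tau> \<le> s \<Longrightarrow> x + \<sigma> *\<^sub>R a + \<tau> *\<^sub>R b \<in> U"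
    and s: "s > 0" and ga: "dd g a ga U" and gab: "dd ga b gab U"
  shows "\<exists>\<sigma> \<tau>. 0 \<le> \<sigma> \<and> \<sigma> \<le> s \<and> 0 \<le> \<tau> \<and> \<tau> \<le> s \<and>
     g (x + s *\<^sub>R a + s *\<^sub>R b) - g (x + s *\<^sub>R a) - g (x + s *\<^sub>R b) + g x = s * s * gab (x + \<sigma> *\<^sub>R a + \<tau> *\<^sub>R b)"
proof -
  define \<phi> where "\<phi> = (\<lambda>\<sigma>. g ((x + s *\<^sub>R b) + \<sigma> *\<^sub>R a) - g (x + \<sigma> *\<^sub>R a))"
  have "\<exists>z. 0 < z \<and> z < s \<and> \<phi> s - \<phi> 0 = (s - 0) * (ga ((x + s *\<^sub>R b) + z *\<^sub>R a) - ga (x + z *\<^sub>R a))"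
  proof (rule MVT2[OF s])
    fix z assume z: "0 \<le> z" "z \<le> s"
    have m1: "(x + s *\<^sub>R b) + z *\<^sub>R a \<in> U" using U[OF z, of s] s by (simp add: add_ac)
    have m2: "x + z *\<^sub>R a \<in> U" using U[OF z, of 0] s by simp
    show "(\<phi> has_real_derivative ga ((x + s *\<^sub>R b) + z *\<^sub>R a) - ga (x + z *\<^sub>R a)) (at z)"
      unfolding \<phi>_def by (intro DERIV_diff dd_at[OF ga] m1 m2)
  qed
  then obtain \<sigma> where \<sigma>: "0 < \<sigma>" "\<sigma> < s" and eq1: "\<phi> s - \<phi> 0 = s * (ga ((x + \<sigma> *\<^sub>R a) + s *\<^sub>R b) - ga ((x + \<sigma> *\<^sub>R a) + 0 *\<^sub>R b))"
    by (auto simp: add_ac)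
  have "\<exists>z. 0 < z \<and> z < s \<and> ga ((x + \<sigma> *\<^sub>R a) + s *\<^sub>R b) - ga ((x + \<sigma> *\<^sub>R a) + 0 *\<^sub>R b) = (s - 0) * gab ((x + \<sigma> *\<^sub>R a) + z *\<^sub>R b)"
  proof (rule MVT2[OF s])
    fix z assume z: "0 \<le> z" "z \<le> s"
    have m1: "(x + \<sigma> *\<^sub>R a) + z *\<^sub>R b \<in> U" using U[of \<sigma> z] z \<sigma> by simp
    show "((\<lambda>t. ga ((x + \<sigma> *\<^sub>R a) + t *\<^sub>R b)) has_real_derivative gab ((x + \<sigma> *\<^sub>R a) + z *\<^sub>R b)) (at z)"
      by (intro dd_at[OF gab] m1)
  qed
  then obtain \<tau> where \<tau>: "0 < \<tau>" "\<tau> < s" and eq2: "ga ((x + \<sigma> *\<^sub>R a) + s *\<^sub>R b) - ga ((x + \<sigma> *\<^sub>R a) + 0 *\<^sub>R b) = s * gab ((x + \<sigma> *\<^sub>R a) + \<tau> *\<^sub>R b)"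
    by auto
  have "g (x + s *\<^sub>R a + s *\<^sub>R b) - g (x + s *\<^sub>R a) - g (x + s *\<^sub>R b) + g x = \<phi> s - \<phi> 0"
    unfolding \<phi>_def by (simp add: add_ac)
  also have "\<dots> = s * s * gab (x + \<sigma> *\<^sub>R a + \<tau> *\<^sub>R b)" using eq1 eq2 by simp
  finally show ?thesis using \<sigma> \<tau> by (intro exI[of _ \<sigma>] exI[of _ \<tau>]) auto
qed

lemma schwarz:
  fixes x a b :: "'a::real_normed_vector"
  assumes U: "open U" "x \<in> U"
    and ga: "dd g a ga U" and gab: "dd ga b gab U"
    and gb: "dd g b gb U" and gba: "dd gb a gba U"
    and c1: "continuous_on U gab" and c2: "continuous_on U gba"
  shows "gab x = gba x"
proof (rule ccontr)
  assume ne: "gab x \<noteq> gba x"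
  define \<epsilon> where "\<epsilon> = \<bar>gab x - gba x\<bar> / 3"
  have \<epsilon>: "\<epsilon> > 0" using ne by (simp add: \<epsilon>_def)
  have "isCont gab x" using c1 U continuous_on_eq_continuous_at by blast
  then have "\<exists>d>0. \<forall>y. dist y x < d \<longrightarrow> dist (gab y) (gab x) < \<epsilon>"
    using \<epsilon> unfolding continuous_at_eps_delta by blast
  then obtain d1 where d1: "d1 > 0" "\<And>y. dist y x < d1 \<Longrightarrow> dist (gab y) (gab x) < \<epsilon>" by blast
  have "isCont gba x" using c2 U continuous_on_eq_continuous_at by blast
  then have "\<exists>d>0. \<forall>y. dist y x < d \<longrightarrow> dist (gba y) (gba x) < \<epsilon>"
    using \<epsilon> unfolding continuous_at_eps_delta by blast
  then obtain d2 where d2: "d2 > 0" "\<And>y. dist y x < d2 \<Longrightarrow> dist (gba y) (gba x) < \<epsilon>" by blast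
  obtain r where r: "r > 0" "ball x r \<subseteq> U" using U open_contains_ball by blast
  define M where "M = norm a + norm b + 1"
  have M: "M > 0" by (simp add: M_def add_nonneg_pos)
  define s where "s = min (min d1 d2) r / (2 * M)"
  have s: "s > 0" using d1 d2 r M by (simp add: s_def)
  have sM0: "s * M = min (min d1 d2) r / 2" using M by (simp add: s_def)
  have sM: "s * M < d1" "s * M < d2" "s * M < r" unfolding sM0 using d1 d2 r by linarith+
  have near: "dist (x + \<sigma> *\<^sub>R c + \<tau> *\<^sub>R d) x \<le> s * M"
    if "0 \<le> \<sigma>" "\<sigma> \<le> s" "0 \<le> \<tau>" "\<tau> \<le> s" "(c = a \<and> d = b) \<or> (c = b \<and> d = a)" for \<sigma> \<tau> c d
  proof -
    have "dist (x + \<sigma> *\<^sub>R c + \<tau> *\<^sub>R d) x = norm (\<sigma> *\<^sub>R c + \<tau> *\<^sub>R d)" by (simp add: dist_norm)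
    also have "\<dots> \<le> \<sigma> * norm c + \<tau> * norm d" using that(1,3)
      by (metis abs_of_nonneg norm_scaleR norm_triangle_ineq)
    also have "\<dots> \<le> s * norm c + s * norm d" using that by (intro add_mono mult_right_mono) auto
    also have "\<dots> \<le> s * M" using that(5) s by (auto simp: M_def distrib_left)
    finally show ?thesis .
  qed
  have inU: "x + \<sigma> *\<^sub>R c + \<tau> *\<^sub>R d \<in> U"
    if "0 \<le> \<sigma>" "\<sigma> \<le> s" "0 \<le> \<tau>" "\<tau> \<le> s" "(c = a \<and> d = b) \<or> (c = b \<and> d = a)" for \<sigma> \<tau> c d
    using near[OF that] sM r by (auto simp: dist_commute)
  obtain \<sigma>1 \<tau>1 where st1: "0 \<le> \<sigma>1" "\<sigma>1 \<le> s" "0 \<le> \<tau>1" "\<tau>1 \<le> s"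
    and e1: "g (x + s *\<^sub>R a + s *\<^sub>R b) - g (x + s *\<^sub>R a) - g (x + s *\<^sub>R b) + g x = s * s * gab (x + \<sigma>1 *\<^sub>R a + \<tau>1 *\<^sub>R b)"
  proof -
    have "\<exists>\<sigma> \<tau>. 0 \<le> \<sigma> \<and> \<sigma> \<le> s \<and> 0 \<le> \<tau> \<and> \<tau> \<le> s \<and>
     g (x + s *\<^sub>R a + s *\<^sub>R b) - g (x + s *\<^sub>R a) - g (x + s *\<^sub>R b) + g x = s * s * gab (x + \<sigma> *\<^sub>R a + \<tau> *\<^sub>R b)"
      by (rule mixed_mvt[OF _ s ga gab], rule inU) auto
    then show ?thesis using that by blast
  qed
  obtain \<sigma>2 \<tau>2 where st2: "0 \<le> \<sigma>2" "\<sigma>2 \<le> s" "0 \<le> \<tau>2" "\<tau>2 \<le> s"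
    and e2: "g (x + s *\<^sub>R b + s *\<^sub>R a) - g (x + s *\<^sub>R b) - g (x + s *\<^sub>R a) + g x = s * s * gba (x + \<sigma>2 *\<^sub>R b + \<tau>2 *\<^sub>R a)"
  proof -
    have "\<exists>\<sigma> \<tau>. 0 \<le> \<sigma> \<and> \<sigma> \<le> s \<and> 0 \<le> \<tau> \<and> \<tau> \<le> s \<and>
     g (x + s *\<^sub>R b + s *\<^sub>R a) - g (x + s *\<^sub>R b) - g (x + s *\<^sub>R a) + g x = s * s * gba (x + \<sigma> *\<^sub>R b + \<tau> *\<^sub>R a)"
      by (rule mixed_mvt[OF _ s gb gba], rule inU) auto
    then show ?thesis using that by blast
  qed
  have "s * s * gab (x + \<sigma>1 *\<^sub>R a + \<tau>1 *\<^sub>R b) = s * s * gba (x + \<sigma>2 *\<^sub>R b + \<tau>2 *\<^sub>R a)"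
  proof -
    have sym: "x + s *\<^sub>R b + s *\<^sub>R a = x + s *\<^sub>R a + s *\<^sub>R b" by (simp add: algebra_simps)
    show ?thesis using e1 e2 unfolding sym by linarith
  qed
  then have eq: "gab (x + \<sigma>1 *\<^sub>R a + \<tau>1 *\<^sub>R b) = gba (x + \<sigma>2 *\<^sub>R b + \<tau>2 *\<^sub>R a)" using s by simp
  have "dist (gab (x + \<sigma>1 *\<^sub>R a + \<tau>1 *\<^sub>R b)) (gab x) < \<epsilon>"
  proof -
    have "dist (x + \<sigma>1 *\<^sub>R a + \<tau>1 *\<^sub>R b) x < d1" using near[OF st1, where c=a and d=b] sM by simp
    then show ?thesis by (rule d1(2))
  qed
  moreover have "dist (gba (x + \<sigma>2 *\<^sub>R b + \<tau>2 *\<^sub>R a)) (gba x) < \<epsilon>"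
  proof -
    have "dist (x + \<sigma>2 *\<^sub>R b + \<tau>2 *\<^sub>R a) x < d2" using near[OF st2, where c=b and d=a] sM by simp
    then show ?thesis by (rule d2(2))
  qed
  ultimately have "\<bar>gab x - gba x\<bar> < 2 * \<epsilon>" using eq by (simp add: dist_real_def)
  then show False by (simp add: \<epsilon>_def)
qed



lemma cs_integral:
  fixes g :: "'a::euclidean_space \<Rightarrow> real"
  assumes gc: "continuous_on UNIV g" and z: "\<And>x. x \<notin> K \<Longrightarrow> g x = 0" and KB: "K \<subseteq> cbox a b"
  shows "g integrable_on UNIV" "integral (cbox a b) g = integral UNIV g"
proof -
  have i: "g integrable_on cbox a b" by (rule integrable_continuous, rule continuous_on_subset[OF gc]) auto
  show "g integrable_on UNIV" by (rule integrable_on_superset[OF i]) (use z KB in auto)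
  have "(\<lambda>x. if x \<in> cbox a b then g x else 0) = g" using z KB by (auto simp: fun_eq_iff)
  then show "integral (cbox a b) g = integral UNIV g" using integral_restrict_UNIV[of "cbox a b" g] by simp
qed

lemma compact_support_integrable:
  fixes g :: "'a::euclidean_space \<Rightarrow> real"
  assumes gc: "continuous_on UNIV g" and z: "\<And>x. x \<notin> K \<Longrightarrow> g x = 0" and K: "compact K"
  shows "g integrable_on UNIV"
proof -
  obtain a where "K \<subseteq> cbox (-a) a" using K compact_imp_bounded bounded_subset_cbox_symmetric by metis
  then show ?thesis using cs_integral[OF gc z] by blast
qed

lemma ibp:
  fixes h h' :: "'a::euclidean_space \<Rightarrow> real"
  assumes K: "compact K" and hz: "\<And>x. x \<notin> K \<Longrightarrow> h x = 0"
    and hc: "continuous_on UNIV h" and h'c: "continuous_on UNIV h'"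
    and h'z: "\<And>x. x \<notin> K \<Longrightarrow> h' x = 0"
    and dh: "dd h e h' UNIV"
  shows "integral UNIV h' = 0"
proof -
  obtain R where R: "\<And>x. x \<in> K \<Longrightarrow> norm x \<le> R"
    using K compact_imp_bounded bounded_iff by metis
  obtain a :: 'a where box: "cball (0::'a) (R + norm e) \<subseteq> cbox (-a) a"
    using bounded_cball bounded_subset_cbox_symmetric by metis
  define B where "B = cbox (-a) a"
  have shiftB: "y \<in> B" if "\<bar>s\<bar> < 1" "y + s *\<^sub>R e \<in> K" for s y
  proof -
    have "norm y \<le> norm (y + s *\<^sub>R e) + norm (s *\<^sub>R e)" by (metis add_diff_cancel norm_triangle_ineq4)
    also have "norm (s *\<^sub>R e) \<le> norm e" using that(1) by (simp add: mult_left_le_one_le)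
    finally have "norm y \<le> R + norm e" using R[OF that(2)] by linarith
    then show ?thesis using box by (auto simp: B_def)
  qed
  have KB: "K \<subseteq> B" using shiftB[of 0] by auto
  define I where "I = integral B h"
  have hI: "(h has_integral I) B" unfolding I_def B_def
    by (rule integrable_integral, rule integrable_continuous, rule continuous_on_subset[OF hc]) auto
  have trans: "((\<lambda>y. h (y + c)) has_integral I) UNIV" for c
  proof -
    have "((\<lambda>y. h (1 *\<^sub>R y + c)) has_integral (I /\<^sub>R 1 ^ DIM('a))) (cbox ((-a - c) /\<^sub>R 1) ((a - c) /\<^sub>R 1))"
      by (rule has_integral_affinity'[OF hI[unfolded B_def]]) simp
    then have h1: "((\<lambda>y. h (y + c)) has_integral I) (cbox (-a - c) (a - c))" by simp
    show ?thesis
    proof (rule has_integral_on_superset[OF h1])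
      fix y assume "y \<notin> cbox (- a - c) (a - c)"
      then have "y + c \<notin> B" unfolding B_def mem_box by (force simp: inner_diff_left inner_add_left)
      then show "h (y + c) = 0" using KB hz by auto
    qed auto
  qed
  define G where "G = (\<lambda>s. integral B (\<lambda>y. h (y + s *\<^sub>R e)))"
  have Gc: "G s = I" if "s \<in> ball 0 1" for s
  proof -
    have "(\<lambda>y. if y \<in> B then h (y + s *\<^sub>R e) else 0) = (\<lambda>y. h (y + s *\<^sub>R e))"
      using that shiftB[of s] hz by (auto simp: fun_eq_iff)
    then have "G s = integral UNIV (\<lambda>y. h (y + s *\<^sub>R e))"
      unfolding G_def using integral_restrict_UNIV[of B "\<lambda>y. h (y + s *\<^sub>R e)"] by simp
    then show ?thesis using trans[of "s *\<^sub>R e"] by (simp add: integral_unique)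
  qed
  have "(G has_field_derivative integral B (\<lambda>y. h' (y + 0 *\<^sub>R e))) (at 0 within ball 0 1)"
    unfolding G_def B_def
  proof (rule leibniz_rule_field_derivative[where fx="\<lambda>s y. h' (y + s *\<^sub>R e)"])
    fix s :: real and y assume "s \<in> ball 0 1" "y \<in> cbox (-a) a"
    have "((\<lambda>t. h (y + t *\<^sub>R e)) has_real_derivative h' (y + s *\<^sub>R e)) (at s)"
      by (rule dd_at[OF dh]) auto
    then show "((\<lambda>s. h (y + s *\<^sub>R e)) has_real_derivative h' (y + s *\<^sub>R e)) (at s within ball 0 1)"
      by (rule has_field_derivative_at_within)
  next
    fix s :: real
    show "(\<lambda>y. h (y + s *\<^sub>R e)) integrable_on cbox (- a) a"
      by (rule integrable_continuous, rule continuous_on_compose2[OF hc]) (auto intro!: continuous_intros)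
  next
    show "continuous_on (ball 0 1 \<times> cbox (- a) a) (\<lambda>(s, y). h' (y + s *\<^sub>R e))"
      unfolding case_prod_unfold
      by (rule continuous_on_compose2[OF h'c]) (auto intro!: continuous_intros)
  qed auto
  then have "(G has_field_derivative integral B h') (at 0)"
    using at_within_open[of 0 "ball (0::real) 1"] by simp
  then have "((\<lambda>s. I) has_field_derivative integral B h') (at 0)"
    by (rule has_field_derivative_transform_within_open[of _ _ _ "ball 0 1"]) (auto simp: Gc)
  then have "integral B h' = 0" using DERIV_const DERIV_unique by blast
  moreover have "integral B h' = integral UNIV h'"
    unfolding B_def by (rule cs_integral(2)[OF h'c h'z]) (use KB B_def in auto)
  ultimately show ?thesis by simp
qed



lemma cof_row: "cof A $ i $ j = det (\<chi> r. if r = i then axis j 1 else A $ r)"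
  unfolding cof_def vec_lambda_beta by (rule arg_cong[where f=det]) (simp add: vec_eq_iff axis_def)

lemma laplace:
  fixes A :: "real^'n^'n"
  shows "(\<Sum>j\<in>UNIV. A$k$j * cof A $ i $ j) = (if k = i then det A else 0)"
proof -
  have "(\<Sum>j\<in>UNIV. A$k$j * cof A $ i $ j) = (\<Sum>j\<in>UNIV. det (\<chi> r. if r = i then A$k$j *s axis j 1 else A $ r))"
  proof (rule sum.cong[OF refl])
    fix j
    show "A$k$j * cof A $ i $ j = det (\<chi> r. if r = i then A$k$j *s axis j 1 else A $ r)"
      using det_row_mul[where k=i and c="A$k$j" and a="\<lambda>_. axis j 1" and b="\<lambda>r. A$r"]
      by (simp add: cof_row)
  qed
  also have "\<dots> = det (\<chi> r. if r = i then (\<Sum>j\<in>UNIV. A$k$j *s axis j 1) else A $ r)"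
    using det_linear_row_sum[where S=UNIV and a="\<lambda>r j. A$k$j *s axis j 1" and k=i and c="\<lambda>r. A$r"]
    by simp
  also have "\<dots> = det (\<chi> r. if r = i then A $ k else A $ r)"
    by (simp only: basis_expansion)
  also have "\<dots> = (if k = i then det A else 0)"
  proof (cases "k = i")
    case True
    have "(\<chi> r. if r = i then A $ k else A $ r) = A" using True by (simp add: vec_eq_iff)
    then show ?thesis using True by simp
  next
    case False
    have "det (\<chi> r. if r = i then A $ k else A $ r) = 0"
      by (rule det_identical_rows[OF False]) (simp add: row_def vec_eq_iff False)
    then show ?thesis using False by simp
  qed
  finally show ?thesis .
qed

lemma dd_cmult: "dd g v g' S \<Longrightarrow> dd (\<lambda>x. c * g x) v (\<lambda>x. c * g' x) S"
  using dd_mult[OF dd_const, of g v g' S c] by simp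

lemma dd_cong: "dd g v g' S \<Longrightarrow> (\<And>x. g x = h x) \<Longrightarrow> (\<And>x. x \<in> S \<Longrightarrow> g' x = h' x) \<Longrightarrow> dd h v h' S"
  unfolding dd_def by (metis ext)

definition cofd :: "('n::finite \<Rightarrow> 'n \<Rightarrow> real) \<Rightarrow> ('n \<Rightarrow> 'n \<Rightarrow> real) \<Rightarrow> 'n \<Rightarrow> 'n \<Rightarrow> real" where
  "cofd A A' i j = (\<Sum>p\<in>{p. p permutes UNIV}. of_int (sign p) *
      (\<Sum>l\<in>UNIV. (if l = i then 0 else A' l (p l)) *
         (\<Prod>k\<in>UNIV-{l}. (if k = i then (if p k = j then 1 else 0) else A k (p k)))))"

lemma cof_dd:
  fixes A A' :: "'n::finite \<Rightarrow> 'n \<Rightarrow> 'a::real_normed_vector \<Rightarrow> real"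
  assumes "\<And>k l. dd (A k l) v (A' k l) S"
  shows "dd (\<lambda>x. cof (\<chi> k l. A k l x) $ i $ j) v (\<lambda>x. cofd (\<lambda>k l. A k l x) (\<lambda>k l. A' k l x) i j) S"
proof -
  have E: "dd (\<lambda>x. if k = i then (if c = j then 1 else 0) else A k c x) v (\<lambda>x. if k = i then 0 else A' k c x) S" for k c
    by (cases "k = i") (auto simp: assms dd_const)
  have "dd (\<lambda>x. \<Sum>p\<in>{p. p permutes UNIV}. of_int (sign p) * (\<Prod>k\<in>UNIV. (if k = i then (if p k = j then 1 else 0) else A k (p k) x))) v
     (\<lambda>x. \<Sum>p\<in>{p. p permutes UNIV}. of_int (sign p) * (\<Sum>l\<in>UNIV. (if l = i then 0 else A' l (p l) x) *
         (\<Prod>k\<in>UNIV-{l}. (if k = i then (if p k = j then 1 else 0) else A k (p k) x)))) S"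
    by (intro dd_sum dd_cmult dd_prod E)
  then show ?thesis
  proof (rule dd_cong)
    fix x
    show "(\<Sum>p\<in>{p. p permutes UNIV}. of_int (sign p) * (\<Prod>k\<in>UNIV. (if k = i then (if p k = j then 1 else 0) else A k (p k) x))) =
      cof (\<chi> k l. A k l x) $ i $ j"
      unfolding cof_def det_def vec_lambda_beta by (rule sum.cong[OF refl]) (auto intro!: prod.cong)
  qed (simp add: cofd_def)
qed

lemma piola:
  fixes A :: "'n::finite \<Rightarrow> 'n \<Rightarrow> real" and B :: "'n \<Rightarrow> 'n \<Rightarrow> 'n \<Rightarrow> real"
  assumes sym: "\<And>k a b. B k a b = B k b a"
  shows "(\<Sum>j\<in>UNIV. cofd A (\<lambda>k l. B k l j) i j) = 0"
proof -
  let ?P = "{p. p permutes (UNIV::'n set)}"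
  define T where "T = (\<lambda>l p. if l = i then 0 else of_int (sign p) * B l (p l) (p i) * (\<Prod>k\<in>UNIV-{l}-{i}. A k (p k)))"
  have inner: "(\<Prod>k\<in>UNIV-{l}. (if k = i then (if p k = j then 1 else 0) else A k (p k))) =
      (if p i = j then 1 else 0) * (\<Prod>k\<in>UNIV-{l}-{i}. A k (p k))" if "l \<noteq> i" for l p j
  proof -
    have "(\<Prod>k\<in>UNIV-{l}. (if k = i then (if p k = j then 1 else 0) else A k (p k))) =
      (if p i = j then 1 else 0) * (\<Prod>k\<in>UNIV-{l}-{i}. (if k = i then (if p k = j then 1 else 0) else A k (p k)))"
      using that by (subst prod.remove[of _ i]) auto
    also have "(\<Prod>k\<in>UNIV-{l}-{i}. (if k = i then (if p k = j then 1 else 0) else A k (p k))) = (\<Prod>k\<in>UNIV-{l}-{i}. A k (p k))"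
      by (rule prod.cong) auto
    finally show ?thesis .
  qed
  have "(\<Sum>j\<in>UNIV. cofd A (\<lambda>k l. B k l j) i j) =
     (\<Sum>j\<in>UNIV. \<Sum>p\<in>?P. \<Sum>l\<in>UNIV. (if p i = j then 1 else 0) * T l p)"
    unfolding cofd_def
  proof (intro sum.cong refl)
    fix j p assume p: "p \<in> ?P"
    show "of_int (sign p) * (\<Sum>l\<in>UNIV. (if l = i then 0 else B l (p l) j) *
         (\<Prod>k\<in>UNIV-{l}. (if k = i then (if p k = j then 1 else 0) else A k (p k)))) =
       (\<Sum>l\<in>UNIV. (if p i = j then 1 else 0) * T l p)"
      unfolding sum_distrib_left
    proof (rule sum.cong[OF refl])
      fix l
      show "of_int (sign p) * ((if l = i then 0 else B l (p l) j) *
         (\<Prod>k\<in>UNIV-{l}. (if k = i then (if p k = j then 1 else 0) else A k (p k)))) =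
         (if p i = j then 1 else 0) * T l p"
        by (cases "l = i"; cases "p i = j") (auto simp: T_def inner)
    qed
  qed
  also have "\<dots> = (\<Sum>p\<in>?P. \<Sum>j\<in>UNIV. \<Sum>l\<in>UNIV. (if p i = j then 1 else 0) * T l p)"
    by (rule sum.swap)
  also have "\<dots> = (\<Sum>p\<in>?P. \<Sum>l\<in>UNIV. \<Sum>j\<in>UNIV. (if p i = j then 1 else 0) * T l p)"
    by (rule sum.cong[OF refl], rule sum.swap)
  also have "\<dots> = (\<Sum>p\<in>?P. \<Sum>l\<in>UNIV. T l p)"
  proof (intro sum.cong refl)
    fix p l
    have "(\<Sum>j\<in>UNIV. (if p i = j then 1 else 0) * T l p) = (\<Sum>j\<in>UNIV. if p i = j then T l p else 0)"
      by (rule sum.cong) auto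
    then show "(\<Sum>j\<in>UNIV. (if p i = j then 1 else 0) * T l p) = T l p" by simp
  qed
  also have "\<dots> = (\<Sum>l\<in>UNIV. \<Sum>p\<in>?P. T l p)" by (rule sum.swap)
  also have "\<dots> = 0"
  proof (rule sum.neutral, rule ballI)
    fix l assume "l \<in> (UNIV::'n set)"
    show "(\<Sum>p\<in>?P. T l p) = 0"
    proof (cases "l = i")
      case True then show ?thesis by (simp add: T_def)
    next
      case False
      let ?t = "Transposition.transpose i l"
      have tp: "?t permutes UNIV" by (rule permutes_swap_id) auto
      have "(\<Sum>p\<in>?P. T l p) = (\<Sum>p\<in>?P. T l (p \<circ> ?t))"
        by (rule sum_permutations_compose_right[OF tp])
      also have "\<dots> = (\<Sum>p\<in>?P. - T l p)"
      proof (rule sum.cong[OF refl])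
        fix p assume "p \<in> ?P"
        then have pp: "permutation p" by (intro permutes_imp_permutation[of UNIV]) simp_all
        have pt: "permutation ?t" by (rule permutes_imp_permutation[OF _ tp]) simp
        have sg: "sign (p \<circ> ?t) = - sign p" using sign_compose[OF pp pt] False
          by (simp add: sign_swap_id)
        have pr: "(\<Prod>k\<in>UNIV-{l}-{i}. A k ((p \<circ> ?t) k)) = (\<Prod>k\<in>UNIV-{l}-{i}. A k (p k))"
          by (rule prod.cong) (auto simp: Transposition.transpose_def)
        show "T l (p \<circ> ?t) = - T l p"
          unfolding T_def using False sg pr sym[of l "p i" "p l"] by simp
      qed
      finally show ?thesis by (simp add: sum_negf)
    qed
  qed
  finally show ?thesis .
qed



lemma dd_component:
  fixes g :: "'a::real_normed_vector \<Rightarrow> real^'m"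
  assumes "g differentiable_on U" "open U"
  shows "dd (\<lambda>x. g x $ k) v (\<lambda>x. frechet_derivative g (at x) v $ k) U"
  unfolding dd_def
proof
  fix y assume y: "y \<in> U"
  have gd: "(g has_derivative frechet_derivative g (at y)) (at y)"
    using assms y differentiable_on_eq_differentiable_at frechet_derivative_works by blast
  have bl: "bounded_linear (frechet_derivative g (at y))" by (rule has_derivative_bounded_linear[OF gd])
  have l: "((\<lambda>t. y + t *\<^sub>R v) has_derivative (\<lambda>t. t *\<^sub>R v)) (at 0)" by (auto intro!: derivative_eq_intros)
  have "((\<lambda>t. g (y + t *\<^sub>R v)) has_derivative (\<lambda>t. frechet_derivative g (at y) (t *\<^sub>R v))) (at 0)"
    using diff_chain_at[OF l, of g] gd by (simp add: o_def)
  then have "((\<lambda>t. g (y + t *\<^sub>R v) $ k) has_derivative (\<lambda>t. frechet_derivative g (at y) (t *\<^sub>R v) $ k)) (at 0)"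
    by (rule bounded_linear.has_derivative[OF bounded_linear_vec_nth])
  moreover have "(\<lambda>t. frechet_derivative g (at y) (t *\<^sub>R v) $ k) = (\<lambda>t. (frechet_derivative g (at y) v $ k) * t)"
    using linear_cmul[OF bounded_linear.linear[OF bl]] by (auto simp: fun_eq_iff mult.commute)
  ultimately show "((\<lambda>t. g (y + t *\<^sub>R v) $ k) has_real_derivative frechet_derivative g (at y) v $ k) (at 0)"
    by (simp add: has_field_derivative_def)
qed

lemma dd_real:
  fixes g :: "'a::real_normed_vector \<Rightarrow> real"
  assumes "g differentiable_on U" "open U"
  shows "dd g v (\<lambda>x. frechet_derivative g (at x) v) U"
  unfolding dd_def
proof
  fix y assume y: "y \<in> U"
  have gd: "(g has_derivative frechet_derivative g (at y)) (at y)"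
    using assms y differentiable_on_eq_differentiable_at frechet_derivative_works by blast
  have bl: "bounded_linear (frechet_derivative g (at y))" by (rule has_derivative_bounded_linear[OF gd])
  have l: "((\<lambda>t. y + t *\<^sub>R v) has_derivative (\<lambda>t. t *\<^sub>R v)) (at 0)" by (auto intro!: derivative_eq_intros)
  have "((\<lambda>t. g (y + t *\<^sub>R v)) has_derivative (\<lambda>t. frechet_derivative g (at y) (t *\<^sub>R v))) (at 0)"
    using diff_chain_at[OF l, of g] gd by (simp add: o_def)
  moreover have "(\<lambda>t. frechet_derivative g (at y) (t *\<^sub>R v)) = (\<lambda>t. (frechet_derivative g (at y) v) * t)"
    using linear_cmul[OF bounded_linear.linear[OF bl]] by (auto simp: fun_eq_iff mult.commute)
  ultimately show "((\<lambda>t. g (y + t *\<^sub>R v)) has_real_derivative frechet_derivative g (at y) v) (at 0)"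
    by (simp add: has_field_derivative_def)
qed

lemma opnorm_lipschitz:
  fixes A B :: "real^'n^'m"
  shows "\<bar>opnorm A - opnorm B\<bar> \<le> real CARD('m) * real CARD('n) * norm (A - B)"
proof -
  have ent: "\<bar>(A - B)$i$j\<bar> \<le> norm (A - B)" for i j
    using component_le_norm_cart[of "(A-B)$i" j] Finite_Cartesian_Product.norm_nth_le[of "A-B" i] by linarith
  have c: "onorm ((*v) (A - B)) \<le> real CARD('m) * real CARD('n) * norm (A - B)"
    by (rule onorm_le_matrix_component[OF ent])
  have t1: "onorm ((*v) A) \<le> onorm ((*v) B) + onorm ((*v) (A - B))"
  proof -
    have "(*v) A = (\<lambda>x. B *v x + (A - B) *v x)" by (auto simp: fun_eq_iff algebra_simps)
    then show ?thesis using onorm_triangle[of "(*v) B" "(*v) (A - B)"] by simp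
  qed
  have t2: "onorm ((*v) B) \<le> onorm ((*v) A) + onorm ((*v) (B - A))"
  proof -
    have "(*v) B = (\<lambda>x. A *v x + (B - A) *v x)" by (auto simp: fun_eq_iff algebra_simps)
    then show ?thesis using onorm_triangle[of "(*v) A" "(*v) (B - A)"] by simp
  qed
  have "onorm ((*v) (B - A)) = onorm ((*v) (A - B))"
  proof -
    have "(*v) (B - A) = (\<lambda>x. - ((A - B) *v x))" by (auto simp: fun_eq_iff algebra_simps)
    then show ?thesis using onorm_neg[of "(*v) (A - B)"] by simp
  qed
  then show ?thesis using t1 t2 c unfolding opnorm_def by linarith
qed

lemma opnorm_continuous:
  "continuous_on (UNIV :: (real^'n^'m) set) opnorm"
proof (rule lipschitz_on_continuous_on, rule lipschitz_onI)
  fix x y :: "real^'n^'m"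
  show "dist (opnorm x) (opnorm y) \<le> (real CARD('m) * real CARD('n)) * dist x y"
    using opnorm_lipschitz[of x y] by (simp add: dist_real_def dist_norm)
qed simp

lemma transpose_bound:
  fixes M :: "real^'n^'n" and y :: "real^'n"
  shows "norm (y v* M) \<le> opnorm M * norm y"
proof -
  let ?z = "y v* M"
  have "norm ?z ^ 2 = ?z \<bullet> ?z" by (simp add: power2_norm_eq_inner)
  also have "\<dots> = y \<bullet> (M *v ?z)" by (rule dot_lmul_matrix)
  also have "\<dots> \<le> norm y * norm (M *v ?z)" by (rule norm_cauchy_schwarz)
  also have "\<dots> \<le> norm y * (opnorm M * norm ?z)"
    unfolding opnorm_def
    by (intro mult_left_mono onorm) auto
  finally have "norm ?z * norm ?z \<le> (opnorm M * norm y) * norm ?z" by (simp add: power2_eq_square algebra_simps)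
  moreover have "opnorm M \<ge> 0" unfolding opnorm_def by (intro onorm_pos_le) auto
  ultimately show ?thesis
    by (cases "norm ?z = 0") (auto simp: mult_le_cancel_right)
qed

lemma continuous_on_glue:
  assumes "open U" "open V" "U \<union> V = UNIV" "continuous_on U g" "continuous_on V g"
  shows "continuous_on UNIV g"
  using continuous_on_open_Un[OF assms(1,2,4,5)] assms(3) by simp

lemma integrable_on_open_cs:
  fixes g :: "'a::euclidean_space \<Rightarrow> real"
  assumes U: "open U" and K: "compact K" "K \<subseteq> U" and gc: "continuous_on U g"
    and z: "\<And>x. x \<in> U \<Longrightarrow> x \<notin> K \<Longrightarrow> g x = 0"
  shows "g integrable_on U"
proof -
  let ?g = "\<lambda>x. if x \<in> U then g x else 0"
  have "continuous_on UNIV ?g"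
  proof (rule continuous_on_glue[OF U, of "- K"])
    show "continuous_on U ?g" using gc by (rule continuous_on_eq) auto
    show "continuous_on (- K) ?g" by (rule continuous_on_eq[OF continuous_on_const[of _ 0]]) (use z in auto)
  qed (use K compact_imp_closed in auto)
  then have "?g integrable_on UNIV" by (rule compact_support_integrable[OF _ _ K(1)]) (use z in auto)
  then show ?thesis using integrable_restrict_UNIV by blast
qed



lemma sum_shape:
  fixes a D S E :: "'n::finite \<Rightarrow> real"
  shows "(\<Sum>j\<in>UNIV. a j + e * ((P' * D j) * S j + R * E j)) = (\<Sum>j\<in>UNIV. a j) + e * (P' * (\<Sum>j\<in>UNIV. D j * S j) + R * (\<Sum>j\<in>UNIV. E j))"
  by (simp add: sum.distrib sum_distrib_left[symmetric] mult.assoc)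

lemma div_identity:
  fixes fv :: "'n::finite \<Rightarrow> real" and A C dC :: "'n \<Rightarrow> 'n \<Rightarrow> real" and g :: "'n \<Rightarrow> real"
  assumes lap: "\<And>k i. (\<Sum>j\<in>UNIV. A k j * C i j) = (if k = i then J else 0)"
    and pio: "\<And>i. (\<Sum>j\<in>UNIV. dC i j) = 0"
  shows "(\<Sum>j\<in>UNIV. g j * (R * (\<Sum>i\<in>UNIV. fv i * C i j)) + e * ((P' * (\<Sum>k\<in>UNIV. A k j * fv k + fv k * A k j)) * (\<Sum>i\<in>UNIV. fv i * C i j) + R * (\<Sum>i\<in>UNIV. A i j * C i j + fv i * dC i j)))
    = (\<Sum>j\<in>UNIV. g j * (R * (\<Sum>i\<in>UNIV. fv i * C i j))) + e * (real CARD('n) * R + 2 * (\<Sum>k\<in>UNIV. fv k * fv k) * P') * J"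
proof -
  have s1: "(\<Sum>j\<in>UNIV. (\<Sum>k\<in>UNIV. A k j * fv k + fv k * A k j) * (\<Sum>i\<in>UNIV. fv i * C i j)) = 2 * (\<Sum>k\<in>UNIV. fv k * fv k) * J"
  proof -
    have "(\<Sum>j\<in>UNIV. (\<Sum>k\<in>UNIV. A k j * fv k + fv k * A k j) * (\<Sum>i\<in>UNIV. fv i * C i j))
        = (\<Sum>j\<in>UNIV. \<Sum>k\<in>UNIV. \<Sum>i\<in>UNIV. 2 * fv k * fv i * (A k j * C i j))"
      by (simp add: sum_distrib_left sum_distrib_right algebra_simps)
    also have "\<dots> = (\<Sum>k\<in>UNIV. \<Sum>j\<in>UNIV. \<Sum>i\<in>UNIV. 2 * fv k * fv i * (A k j * C i j))"
      by (rule sum.swap)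
    also have "\<dots> = (\<Sum>k\<in>UNIV. \<Sum>i\<in>UNIV. \<Sum>j\<in>UNIV. 2 * fv k * fv i * (A k j * C i j))"
      by (rule sum.cong[OF refl], rule sum.swap)
    also have "\<dots> = (\<Sum>k\<in>UNIV. \<Sum>i\<in>UNIV. 2 * fv k * fv i * (if k = i then J else 0))"
      by (simp add: sum_distrib_left[symmetric] lap)
    also have "\<dots> = (\<Sum>k\<in>UNIV. 2 * fv k * fv k * J)"
      by (simp add: if_distrib[of "\<lambda>x. _ * x"] cong: if_cong)
    also have "\<dots> = 2 * (\<Sum>k\<in>UNIV. fv k * fv k) * J"
      by (simp add: sum_distrib_left sum_distrib_right algebra_simps)
    finally show ?thesis .
  qed
  have s2: "(\<Sum>j\<in>UNIV. \<Sum>i\<in>UNIV. A i j * C i j + fv i * dC i j) = real CARD('n) * J"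
  proof -
    have "(\<Sum>j\<in>UNIV. \<Sum>i\<in>UNIV. A i j * C i j + fv i * dC i j) = (\<Sum>i\<in>UNIV. \<Sum>j\<in>UNIV. A i j * C i j + fv i * dC i j)"
      by (rule sum.swap)
    also have "\<dots> = (\<Sum>i\<in>UNIV. (\<Sum>j\<in>UNIV. A i j * C i j) + fv i * (\<Sum>j\<in>UNIV. dC i j))"
      by (simp add: sum.distrib sum_distrib_left)
    also have "\<dots> = (\<Sum>i\<in>(UNIV::'n set). J)" by (simp add: lap pio)
    finally show ?thesis by simp
  qed
  have "(\<Sum>j\<in>UNIV. g j * (R * (\<Sum>i\<in>UNIV. fv i * C i j)) + e * ((P' * (\<Sum>k\<in>UNIV. A k j * fv k + fv k * A k j)) * (\<Sum>i\<in>UNIV. fv i * C i j) + R * (\<Sum>i\<in>UNIV. A i j * C i j + fv i * dC i j)))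
    = (\<Sum>j\<in>UNIV. g j * (R * (\<Sum>i\<in>UNIV. fv i * C i j))) + e * (P' * (\<Sum>j\<in>UNIV. (\<Sum>k\<in>UNIV. A k j * fv k + fv k * A k j) * (\<Sum>i\<in>UNIV. fv i * C i j)) + R * (\<Sum>j\<in>UNIV. \<Sum>i\<in>UNIV. A i j * C i j + fv i * dC i j))"
    by (rule sum_shape)
  also have "\<dots> = (\<Sum>j\<in>UNIV. g j * (R * (\<Sum>i\<in>UNIV. fv i * C i j))) + e * (real CARD('n) * R + 2 * (\<Sum>k\<in>UNIV. fv k * fv k) * P') * J"
    unfolding s1 s2 by (simp add: algebra_simps)
  finally show ?thesis .
qed



lemma continuous_on_if_const[continuous_intros]:
  "continuous_on U g \<Longrightarrow> continuous_on U (\<lambda>x. if b then c else g x)"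
  by (cases b) auto

theorem lemma4p2:
  fixes U :: "(real^'n) set" and f :: "real^'n \<Rightarrow> real^'n"
    and \<Psi> \<Psi>' :: "real \<Rightarrow> real" and \<eta> :: "real^'n \<Rightarrow> real"
  assumes n2: "CARD('n) \<ge> 2"
    and U: "open U"
    and f: "smooth_on f U"
    and \<Psi>_deriv: "\<And>t. t \<ge> 0 \<Longrightarrow> (\<Psi> has_real_derivative \<Psi>' t) (at t within {0..})"
    and \<Psi>'_cont: "continuous_on {0..} \<Psi>'"
    and \<Psi>_nonneg: "\<And>t. t \<ge> 0 \<Longrightarrow> \<Psi> t \<ge> 0"
    and \<eta>_smooth: "smooth_on \<eta> U"
    and \<eta>_supp: "compact (closure {x. \<eta> x \<noteq> 0})" "closure {x. \<eta> x \<noteq> 0} \<subseteq> U"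
    and \<eta>_nonneg: "\<And>x. x \<in> U \<Longrightarrow> \<eta> x \<ge> 0"
  shows "\<bar>integral U (\<lambda>x. \<eta> x * (real CARD('n) * \<Psi> ((norm (f x))\<^sup>2)
              + 2 * (norm (f x))\<^sup>2 * \<Psi>' ((norm (f x))\<^sup>2)) * jac f x)\<bar>
         \<le> integral U (\<lambda>x. norm (grad \<eta> x) * norm (f x) * \<Psi> ((norm (f x))\<^sup>2)
              * opnorm (cof (Dmat f x)))"
proof -
  have "Ck_on (Suc (Suc 0)) f U" using f unfolding smooth_on_def by blast
  then have fd: "f differentiable_on U"
    and F1d: "\<And>l. (\<lambda>x. frechet_derivative f (at x) (axis l 1)) differentiable_on U"
    and F2c: "\<And>l m. continuous_on U (\<lambda>x. frechet_derivative (\<lambda>x. frechet_derivative f (at x) (axis l 1)) (at x) (axis m 1))"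
    by auto
  have "Ck_on (Suc 0) \<eta> U" using \<eta>_smooth unfolding smooth_on_def by blast
  then have \<eta>d: "\<eta> differentiable_on U" and gEc0: "\<And>j. continuous_on U (\<lambda>x. frechet_derivative \<eta> (at x) (axis j 1))"
    by auto
  define F1 where "F1 l x = frechet_derivative f (at x) (axis l 1)" for l x
  define A where "A k l x = F1 l x $ k" for k l x
  define B where "B k l m x = frechet_derivative (F1 l) (at x) (axis m 1) $ k" for k l m x
  define fk where "fk k x = f x $ k" for k x
  define gE where "gE j x = frechet_derivative \<eta> (at x) (axis j 1)" for j x
  have F1d': "F1 l differentiable_on U" for l using F1d[of l] by (simp add: F1_def[abs_def])
  have ddf: "dd (fk k) (axis l 1) (A k l) U" for k l
    unfolding fk_def[abs_def] A_def[abs_def] F1_def by (rule dd_component[OF fd U])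
  have ddA: "dd (A k l) (axis m 1) (B k l m) U" for k l m
    unfolding A_def[abs_def] B_def[abs_def] by (rule dd_component[OF F1d' U])
  have dd\<eta>: "dd \<eta> (axis j 1) (gE j) U" for j
    unfolding gE_def[abs_def] by (rule dd_real[OF \<eta>d U])
  have cf: "continuous_on U (fk k)" for k
    unfolding fk_def[abs_def] by (intro continuous_intros differentiable_imp_continuous_on[OF fd])
  have cA: "continuous_on U (A k l)" for k l
    unfolding A_def[abs_def] by (intro continuous_intros differentiable_imp_continuous_on[OF F1d'])
  have cB: "continuous_on U (B k l m)" for k l m
    unfolding B_def[abs_def] F1_def[abs_def] by (intro continuous_intros F2c)
  have c\<eta>: "continuous_on U \<eta>" by (rule differentiable_imp_continuous_on[OF \<eta>d])
  have cgE: "continuous_on U (gE j)" for j unfolding gE_def[abs_def] by (rule gEc0)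
  have symB: "B k l m x = B k m l x" if "x \<in> U" for k l m x
    by (rule schwarz[OF U that ddf ddA ddf ddA cB cB])

  have \<Psi>c: "continuous_on {0..} \<Psi>"
    unfolding continuous_on_eq_continuous_within by (auto intro: DERIV_continuous[OF \<Psi>_deriv])
  have cf0: "continuous_on U f" by (rule differentiable_imp_continuous_on[OF fd])
  define Q where "Q x = (norm (f x))\<^sup>2" for x
  have Qnn: "Q x \<ge> 0" for x by (simp add: Q_def)
  have Qsum: "Q x = (\<Sum>k\<in>UNIV. fk k x * fk k x)" for x
    unfolding Q_def fk_def by (simp add: power2_norm_eq_inner inner_vec_def)
  have ddQ: "dd Q (axis j 1) (\<lambda>x. \<Sum>k\<in>UNIV. A k j x * fk k x + fk k x * A k j x) U" for j
  proof -
    have "dd (\<lambda>x. \<Sum>k\<in>UNIV. fk k x * fk k x) (axis j 1) (\<lambda>x. \<Sum>k\<in>UNIV. A k j x * fk k x + fk k x * A k j x) U"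
      by (intro dd_sum dd_mult ddf)
    then show ?thesis by (rule dd_cong) (simp_all add: Qsum)
  qed
  define R where "R x = \<Psi> (Q x)" for x
  have ddR: "dd R (axis j 1) (\<lambda>x. \<Psi>' (Q x) * (\<Sum>k\<in>UNIV. A k j x * fk k x + fk k x * A k j x)) U" for j
    unfolding R_def[abs_def] by (rule dd_comp[OF \<Psi>_deriv Qnn ddQ])
  define C where "C i j x = cof (\<chi> k l. A k l x) $ i $ j" for i j x
  define dC where "dC i j m x = cofd (\<lambda>k l. A k l x) (\<lambda>k l. B k l m x) i j" for i j m x
  have ddC: "dd (C i j) (axis m 1) (dC i j m) U" for i j m
    unfolding C_def[abs_def] dC_def[abs_def] by (rule cof_dd[OF ddA])
  define S where "S j x = (\<Sum>i\<in>UNIV. fk i x * C i j x)" for j x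
  define dS where "dS j x = (\<Sum>i\<in>UNIV. A i j x * C i j x + fk i x * dC i j j x)" for j x
  have ddS: "dd (S j) (axis j 1) (dS j) U" for j
    unfolding S_def[abs_def] dS_def[abs_def] by (intro dd_sum dd_mult ddf ddC)
  define W where "W j x = \<eta> x * (R x * S j x)" for j x
  define dW where "dW j x = gE j x * (R x * S j x) + \<eta> x * ((\<Psi>' (Q x) * (\<Sum>k\<in>UNIV. A k j x * fk k x + fk k x * A k j x)) * S j x + R x * dS j x)" for j x
  have ddW: "dd (W j) (axis j 1) (dW j) U" for j
    unfolding W_def[abs_def] dW_def[abs_def] by (intro dd_mult dd\<eta> ddR ddS)
  have cQ: "continuous_on U Q" unfolding Q_def[abs_def] by (intro continuous_intros cf0)
  have cR: "continuous_on U R" unfolding R_def[abs_def]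
    by (rule continuous_on_compose2[OF \<Psi>c cQ]) (auto simp: Qnn)
  have cP': "continuous_on U (\<lambda>x. \<Psi>' (Q x))"
    by (rule continuous_on_compose2[OF \<Psi>'_cont cQ]) (auto simp: Qnn)
  have cC: "continuous_on U (C i j)" for i j
    unfolding C_def[abs_def] cof_def det_def vec_lambda_beta by (intro continuous_intros cA)
  have cdC: "continuous_on U (dC i j m)" for i j m
    unfolding dC_def[abs_def] cofd_def by (intro continuous_intros cA cB)
  have cS: "continuous_on U (S j)" for j unfolding S_def[abs_def] by (intro continuous_intros cf cC)
  have cdS: "continuous_on U (dS j)" for j unfolding dS_def[abs_def] by (intro continuous_intros cf cC cA cdC)
  have cW: "continuous_on U (W j)" for j unfolding W_def[abs_def] by (intro continuous_intros c\<eta> cR cS)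
  have cdW: "continuous_on U (dW j)" for j unfolding dW_def[abs_def]
    by (intro continuous_intros cgE cR cS c\<eta> cP' cA cf cdS)
  define K where "K = closure {x. \<eta> x \<noteq> 0}"
  have Kc: "compact K" and KU: "K \<subseteq> U" using \<eta>_supp by (auto simp: K_def)
  have opK: "open (- K)" using Kc compact_imp_closed by auto
  have UK: "U \<union> - K = UNIV" using KU by auto
  have \<eta>z: "\<eta> x = 0" if "x \<notin> K" for x using that closure_subset[of "{x. \<eta> x \<noteq> 0}"] by (auto simp: K_def)
  have gEz: "gE j x = 0" if "x \<in> U" "x \<notin> K" for j x
  proof -
    have "((\<lambda>_. 0::real) has_derivative (\<lambda>_. 0)) (at x)" by simp
    then have "(\<eta> has_derivative (\<lambda>_. 0)) (at x)"
      by (rule has_derivative_transform_within_open[where s="-K"]) (use opK that \<eta>z in auto)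
    then have "frechet_derivative \<eta> (at x) = (\<lambda>_. 0)" by (rule frechet_derivative_at[symmetric])
    then show ?thesis by (simp add: gE_def)
  qed
  have Wz: "W j x = 0" if "x \<notin> K" for j x using \<eta>z[OF that] by (simp add: W_def)
  have dWz: "dW j x = 0" if "x \<in> U" "x \<notin> K" for j x using \<eta>z[OF that(2)] gEz[OF that] by (simp add: dW_def)
  define h' where "h' j x = (if x \<in> U then dW j x else 0)" for j x
  have cWU: "continuous_on UNIV (W j)" for j
  proof (rule continuous_on_glue[OF U opK UK cW])
    show "continuous_on (- K) (W j)" by (rule continuous_on_eq[OF continuous_on_const[of _ 0]]) (use Wz in auto)
  qed
  have ch': "continuous_on UNIV (h' j)" for j
  proof (rule continuous_on_glue[OF U opK UK])
    show "continuous_on U (h' j)" by (rule continuous_on_eq[OF cdW]) (auto simp: h'_def)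
    show "continuous_on (- K) (h' j)" by (rule continuous_on_eq[OF continuous_on_const[of _ 0]]) (use dWz in \<open>auto simp: h'_def\<close>)
  qed
  have h'z: "h' j x = 0" if "x \<notin> K" for j x using dWz[OF _ that] by (simp add: h'_def)
  have ddWU: "dd (W j) (axis j 1) (h' j) UNIV" for j
    unfolding dd_def
  proof
    fix y :: "real^'n"
    show "((\<lambda>t. W j (y + t *\<^sub>R axis j 1)) has_real_derivative h' j y) (at 0)"
    proof (cases "y \<in> U")
      case True
      then show ?thesis using ddW[of j] by (simp add: dd_def h'_def)
    next
      case False
      then have yK: "y \<notin> K" using KU by auto
      let ?s = "(\<lambda>t::real. y + t *\<^sub>R axis j 1) -` (- K)"
      have "open ?s" by (rule continuous_open_vimage[OF opK]) (intro continuous_intros)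
      have "((\<lambda>t::real. 0::real) has_real_derivative 0) (at 0)" by simp
      then have "((\<lambda>t. W j (y + t *\<^sub>R axis j 1)) has_real_derivative 0) (at 0)"
        by (rule has_field_derivative_transform_within_open[OF _ \<open>open ?s\<close>]) (use yK Wz in auto)
      then show ?thesis using False by (simp add: h'_def)
    qed
  qed
  have ibpj: "integral UNIV (h' j) = 0" for j by (rule ibp[OF Kc Wz cWU ch' h'z ddWU])
  have inth': "h' j integrable_on UNIV" for j by (rule compact_support_integrable[OF ch' h'z Kc])
  have DM: "Dmat f x = (\<chi> k l. A k l x)" for x
    unfolding Dmat_def matrix_def A_def F1_def by simp
  define T1 where "T1 x = (\<Sum>j\<in>UNIV. gE j x * (R x * S j x))" for x
  define I where "I x = \<eta> x * (real CARD('n) * \<Psi> ((norm (f x))\<^sup>2)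
              + 2 * (norm (f x))\<^sup>2 * \<Psi>' ((norm (f x))\<^sup>2)) * jac f x" for x
  have sumid: "(\<Sum>j\<in>UNIV. dW j x) = T1 x + I x" if "x \<in> U" for x
  proof -
    have lap: "(\<Sum>j\<in>UNIV. A k j x * C i j x) = (if k = i then jac f x else 0)" for k i
      using laplace[of "\<chi> k l. A k l x" k i] by (simp add: C_def jac_def DM)
    have pio: "(\<Sum>j\<in>UNIV. dC i j j x) = 0" for i
      unfolding dC_def by (rule piola) (rule symB[OF that])
    have "(\<Sum>j\<in>UNIV. dW j x) = (\<Sum>j\<in>UNIV. gE j x * (R x * S j x)) + \<eta> x * (real CARD('n) * R x + 2 * (\<Sum>k\<in>UNIV. fk k x * fk k x) * \<Psi>' (Q x)) * jac f x"
      unfolding dW_def S_def dS_def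
      by (rule div_identity[where fv="\<lambda>i. fk i x" and A="\<lambda>k j. A k j x" and C="\<lambda>i j. C i j x"
          and dC="\<lambda>i j. dC i j j x" and g="\<lambda>j. gE j x" and R="R x" and e="\<eta> x" and P'="\<Psi>' (Q x)"
          and J="jac f x", OF lap pio])
    also have "\<dots> = T1 x + I x"
      unfolding T1_def I_def R_def Qsum[symmetric] by (simp add: Q_def)
    finally show ?thesis .
  qed

  have intsum: "integral UNIV (\<lambda>x. \<Sum>j\<in>UNIV. h' j x) = 0"
  proof -
    have "integral UNIV (\<lambda>x. \<Sum>j\<in>UNIV. h' j x) = (\<Sum>j\<in>UNIV. integral UNIV (h' j))"
      by (rule Henstock_Kurzweil_Integration.integral_sum) (auto intro: inth')
    then show ?thesis by (simp add: ibpj)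
  qed
  have sumh: "(\<lambda>x. \<Sum>j\<in>UNIV. h' j x) = (\<lambda>x. if x \<in> U then T1 x + I x else 0)"
    by (auto simp: h'_def fun_eq_iff sumid)
  have int0: "integral U (\<lambda>x. T1 x + I x) = 0"
    using intsum unfolding sumh integral_restrict_UNIV .
  have cdet: "continuous_on U (\<lambda>x. det (\<chi> k l. A k l x))"
    unfolding det_def vec_lambda_beta by (intro continuous_intros cA)
  have cT1: "continuous_on U T1" unfolding T1_def[abs_def] by (intro continuous_intros cgE cR cS)
  have Ieq: "I = (\<lambda>x. \<eta> x * (real CARD('n) * R x + 2 * Q x * \<Psi>' (Q x)) * det (\<chi> k l. A k l x))"
    by (simp add: I_def R_def Q_def jac_def DM fun_eq_iff)
  have cI: "continuous_on U I" unfolding Ieq by (intro continuous_intros c\<eta> cR cQ cP' cdet)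
  have T1z: "T1 x = 0" if "x \<in> U" "x \<notin> K" for x using gEz[OF that] by (simp add: T1_def)
  have Iz: "I x = 0" if "x \<in> U" "x \<notin> K" for x using \<eta>z[OF that(2)] by (simp add: I_def)
  have intT1: "T1 integrable_on U" by (rule integrable_on_open_cs[OF U Kc KU cT1 T1z])
  have intI: "I integrable_on U" by (rule integrable_on_open_cs[OF U Kc KU cI Iz])
  have "integral U T1 + integral U I = 0"
    using int0 Henstock_Kurzweil_Integration.integral_add[OF intT1 intI] by simp
  then have II: "integral U I = - integral U T1" by linarith
  define G where "G x = norm (grad \<eta> x) * norm (f x) * \<Psi> ((norm (f x))\<^sup>2) * opnorm (cof (Dmat f x))" for x
  have gradE: "grad \<eta> x = (\<chi> j. gE j x)" for x by (simp add: grad_def gE_def)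
  have cofE: "cof (Dmat f x) = (\<chi> i j. C i j x)" for x by (simp add: DM C_def vec_eq_iff)
  have Geq: "G = (\<lambda>x. norm (\<chi> j. gE j x) * norm (f x) * R x * opnorm (\<chi> i j. C i j x))"
    by (simp add: G_def gradE cofE R_def Q_def fun_eq_iff)
  have copn: "continuous_on U (\<lambda>x. opnorm (\<chi> i j. C i j x))"
    by (rule continuous_on_compose2[OF opnorm_continuous, of U "\<lambda>x. \<chi> i j. C i j x"])
      (auto intro!: continuous_intros cC)
  have cG: "continuous_on U G" unfolding Geq by (intro continuous_intros cgE cf0 cR copn)
  have Gz: "G x = 0" if "x \<in> U" "x \<notin> K" for x
  proof -
    have "grad \<eta> x = 0" using gEz[OF that] by (simp add: gradE vec_eq_iff)
    then show ?thesis by (simp add: G_def)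
  qed
  have intG: "G integrable_on U" by (rule integrable_on_open_cs[OF U Kc KU cG Gz])
  have bound: "norm (T1 x) \<le> G x" if "x \<in> U" for x
  proof -
    let ?g = "grad \<eta> x" and ?V = "f x v* cof (Dmat f x)"
    have Rnn: "R x \<ge> 0" using \<Psi>_nonneg Qnn by (simp add: R_def)
    have "T1 x = R x * (?g \<bullet> ?V)"
      by (simp add: T1_def S_def gradE cofE vector_matrix_mult_def inner_vec_def fk_def
          sum_distrib_left mult_ac)
    then have "norm (T1 x) = R x * \<bar>?g \<bullet> ?V\<bar>" using Rnn by (simp add: abs_mult)
    also have "\<dots> \<le> R x * (norm ?g * norm ?V)"
      by (intro mult_left_mono Rnn Cauchy_Schwarz_ineq2)
    also have "\<dots> \<le> R x * (norm ?g * (opnorm (cof (Dmat f x)) * norm (f x)))"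
      by (intro mult_left_mono Rnn transpose_bound norm_ge_zero)
    also have "\<dots> = G x" by (simp add: G_def R_def Q_def mult_ac)
    finally show ?thesis .
  qed
  have "norm (integral U T1) \<le> integral U G"
    by (rule integral_norm_bound_integral[OF intT1 intG bound])
  then have "\<bar>integral U I\<bar> \<le> integral U G" using II by simp
  then show ?thesis by (simp add: I_def[abs_def] G_def[abs_def])
qed


end
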